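(* For every integer $n\ge 0$, $c_3(11n+5)\equiv c_3(11n+7)\equiv c_3(11n+9)\equiv 0\pmod 2$.
   Context: A partition of $n\ge 0$ is a finite multiset of positive integers summing to $n$. For $n\ge 0$, $c_3(n)$ denotes the number of partitions $\lambda$ of $n$ for which there exists an integer $j\ge 1$ such that: the part $1$ appears in $\lambda$ exactly $j^2$ or exactly $j^2+1$ times; every odd part greater than $1$ appears at most once; the even parts of $\lambda$ are distinct; and every even part of $\lambda$ is either at most $2j$, or is a multiple of $4$ that is at least $4j+4$ (in particular no even integer in $\{2j+2,2j+4,\dots,4j+2\}$ is a part). *)

theory Defs
  imports Main "HOL-Library.Multiset"
begin

definition is_partition :: "nat multiset \<Rightarrow> nat \<Rightarrow> bool" where
  "is_partition p n \<longleftrightarrow> (\<forall>x\<in>#p. 0 < x) \<and> sum_mset p = n"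

definition c3_cond :: "nat multiset \<Rightarrow> bool" where
  "c3_cond p \<longleftrightarrow> (\<exists>j::nat. j \<ge> 1 \<and>
      (count p 1 = j^2 \<or> count p 1 = j^2 + 1) \<and>
      (\<forall>k. odd k \<and> k > 1 \<longrightarrow> count p k \<le> 1) \<and>
      (\<forall>k. even k \<longrightarrow> count p k \<le> 1) \<and>
      (\<forall>k\<in>#p. even k \<longrightarrow> (k \<le> 2*j \<or> (4 dvd k \<and> k \<ge> 4*j + 4))))"

definition c3 :: "nat \<Rightarrow> nat" where
  "c3 n = card {p. is_partition p n \<and> c3_cond p}"

end

theory Submission
  imports Defs "HOL-Computational_Algebra.Formal_Power_Series" "HOL-Library.Z2"
begin
unbundle fps_syntax

type_synonym bfps = "bit fps"

definition cong :: "nat \<Rightarrow> bfps \<Rightarrow> bfps \<Rightarrow> bool" where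
  "cong K f g \<longleftrightarrow> (\<forall>i<K. f $ i = g $ i)"

lemma cong_refl[simp]: "cong K f f" by (simp add: cong_def)
lemma cong_sym: "cong K f g \<Longrightarrow> cong K g f" by (simp add: cong_def)
lemma cong_trans: "cong K f g \<Longrightarrow> cong K g h \<Longrightarrow> cong K f h" by (simp add: cong_def)
lemma cong_mono: "cong K f g \<Longrightarrow> K' \<le> K \<Longrightarrow> cong K' f g" by (simp add: cong_def)
lemma cong_add: "cong K f g \<Longrightarrow> cong K f' g' \<Longrightarrow> cong K (f + f') (g + g')"
  by (simp add: cong_def)
lemma cong_mult_right: "cong K f g \<Longrightarrow> cong K (f * h) (g * h)"
  unfolding cong_def fps_mult_nth by auto
lemma cong_mult_left: "cong K f g \<Longrightarrow> cong K (h * f) (h * g)"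
  using cong_mult_right[of K f g h] by (simp add: mult.commute)
lemma cong_mult: "cong K f g \<Longrightarrow> cong K f' g' \<Longrightarrow> cong K (f * f') (g * g')"
  by (meson cong_mult_left cong_mult_right cong_trans)
lemma cong_sum: "(\<And>x. x \<in> A \<Longrightarrow> cong K (f x) (g x)) \<Longrightarrow> cong K (sum f A) (sum g A)"
  by (induction A rule: infinite_finite_induct) (auto intro: cong_add)
lemma cong_cancel:
  assumes "cong K (f * u) (g * u)" "u $ 0 \<noteq> 0"
  shows "cong K f g"
proof -
  have "cong K (f * u * inverse u) (g * u * inverse u)" using assms(1) by (rule cong_mult_right)
  moreover have "f * u * inverse u = f" "g * u * inverse u = g"
    using inverse_mult_eq_1'[OF assms(2)] by (simp_all add: mult.assoc)
  ultimately show ?thesis by simp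
qed
lemma cong_nth: "cong K f g \<Longrightarrow> m < K \<Longrightarrow> f $ m = g $ m" by (simp add: cong_def)
lemma cong_Xpow_zero: "K \<le> e \<Longrightarrow> cong K (fps_X ^ e * f) 0"
  by (simp add: cong_def fps_X_power_mult_nth)
lemma cong_Xpow_mult: "cong K f g \<Longrightarrow> cong K (fps_X ^ e * f) (fps_X ^ e * g)"
  by (rule cong_mult_left)

lemma bfps_uminus[simp]: "- (f::bfps) = f"
  by (rule fps_ext) simp
lemma bfps_minus[simp]: "(f::bfps) - g = f + g"
  by (simp add: diff_conv_add_uminus)
lemma bit_add_self[simp]: "(x::bit) + x = 0"
  by (cases x) simp_all
lemma bfps_add_self[simp]: "(f::bfps) + f = 0"
  by (rule fps_ext) (simp only: fps_add_nth bit_add_self fps_zero_nth)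
lemma bfps_two[simp]: "(2::bfps) = 0"
  by (metis one_add_one bfps_add_self)
lemma bfps_sq_add: "((f::bfps) + g)^2 = f^2 + g^2"
  by (simp add: power2_sum)
lemma bfps_sq_sum: "(\<Sum>x\<in>A. (f x :: bfps))^2 = (\<Sum>x\<in>A. (f x)^2)"
  by (induction A rule: infinite_finite_induct) (auto simp: bfps_sq_add)

lemma Xpow_cancel: "fps_X ^ A * (f::bfps) = fps_X ^ A * g \<Longrightarrow> f = g"
proof (rule fps_ext)
  fix n assume "fps_X ^ A * f = fps_X ^ A * g"
  hence "(fps_X ^ A * f) $ (n + A) = (fps_X ^ A * g) $ (n + A)" by simp
  thus "f $ n = g $ n" by (simp add: fps_X_power_mult_nth)
qed


definition Pd :: "nat set \<Rightarrow> bfps" where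
  "Pd F = (\<Prod>s\<in>F. 1 + fps_X ^ s)"

definition D :: "nat set \<Rightarrow> bfps" where
  "D S = Abs_fps (\<lambda>n. Pd (S \<inter> {1..n}) $ n)"

lemma Pd_empty[simp]: "Pd {} = 1" by (simp add: Pd_def)

lemma Pd_ge: "finite G \<Longrightarrow> (\<forall>s\<in>G. K \<le> s) \<Longrightarrow> cong K (Pd G) 1"
proof (induction G rule: finite_induct)
  case empty thus ?case by simp
next
  case (insert x G)
  have "Pd (insert x G) = Pd G + fps_X ^ x * Pd G"
    using insert by (simp add: Pd_def algebra_simps)
  moreover have "cong K (Pd G + fps_X ^ x * Pd G) (1 + 0)"
    using insert by (intro cong_add cong_Xpow_zero) auto
  ultimately show ?case by simp
qed

lemma Pd_split: "finite F \<Longrightarrow> Pd F = Pd (F \<inter> A) * Pd (F - A)"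
  unfolding Pd_def by (rule prod.Int_Diff)

lemma Pd_cong:
  assumes "finite F" "finite G" "F \<inter> {..<K} = G \<inter> {..<K}"
  shows "cong K (Pd F) (Pd G)"
proof -
  have a: "cong K (Pd F) (Pd (F \<inter> {..<K}))"
    using Pd_split[OF assms(1), of "{..<K}"] Pd_ge[of "F - {..<K}" K] assms(1)
      cong_mult_left[of K "Pd (F - {..<K})" 1 "Pd (F \<inter> {..<K})"] by auto
  have b: "cong K (Pd G) (Pd (G \<inter> {..<K}))"
    using Pd_split[OF assms(2), of "{..<K}"] Pd_ge[of "G - {..<K}" K] assms(2)
      cong_mult_left[of K "Pd (G - {..<K})" 1 "Pd (G \<inter> {..<K})"] by auto
  show ?thesis using a b assms(3) by (metis cong_sym cong_trans)
qed

lemma D_cong: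
  assumes "finite F" "F \<inter> {..<K} = (S - {0}) \<inter> {..<K}"
  shows "cong K (D S) (Pd F)"
  unfolding cong_def
proof (intro allI impI)
  fix i assume i: "i < K"
  have "cong (Suc i) (Pd (S \<inter> {1..i})) (Pd F)"
  proof (rule Pd_cong)
    show "S \<inter> {1..i} \<inter> {..<Suc i} = F \<inter> {..<Suc i}"
    proof -
      have "F \<inter> {..<Suc i} = F \<inter> {..<K} \<inter> {..<Suc i}" using i by auto
      also have "\<dots> = (S - {0}) \<inter> {..<K} \<inter> {..<Suc i}" using assms(2) by simp
      also have "\<dots> = S \<inter> {1..i}" using i by auto
      finally show ?thesis by auto
    qed
  qed (use assms in auto)
  thus "D S $ i = Pd F $ i" by (simp add: D_def cong_def)
qed

lemma D_cong_trunc: "cong (Suc n) (D S) (Pd (S \<inter> {1..n}))"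
  by (rule D_cong) auto

lemma D_nth0[simp]: "D S $ 0 = 1"
  by (simp add: D_def)

lemma D_mult:
  assumes "S \<inter> T = {}"
  shows "D (S \<union> T) = D S * D T"
proof (rule fps_ext)
  fix n
  have "cong (Suc n) (D S * D T) (Pd (S \<inter> {1..n}) * Pd (T \<inter> {1..n}))"
    by (intro cong_mult D_cong_trunc)
  also have "Pd (S \<inter> {1..n}) * Pd (T \<inter> {1..n}) = Pd ((S \<union> T) \<inter> {1..n})"
    unfolding Pd_def using assms by (subst prod.union_disjoint[symmetric]) (auto simp: Int_Un_distrib2)
  finally have "cong (Suc n) (D S * D T) (D (S \<union> T))"
    using D_cong_trunc cong_sym cong_trans by blast
  thus "D (S \<union> T) $ n = (D S * D T) $ n" by (simp add: cong_def)
qed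

lemma Pd_double: "finite F \<Longrightarrow> Pd ((*) 2 ` F) = (Pd F)^2"
proof -
  assume "finite F"
  have "Pd ((*) 2 ` F) = (\<Prod>s\<in>F. 1 + fps_X ^ (2 * s))"
    unfolding Pd_def by (subst prod.reindex) (auto simp: inj_on_def)
  also have "\<dots> = (\<Prod>s\<in>F. (1 + fps_X ^ s)^2)"
    by (intro prod.cong) (auto simp: bfps_sq_add power_mult[symmetric] mult.commute)
  also have "\<dots> = (Pd F)^2" by (simp add: Pd_def prod_power_distrib)
  finally show ?thesis .
qed

lemma D_double: "D ((*) 2 ` S) = (D S)^2"
proof (rule fps_ext)
  fix n
  have "cong (Suc n) ((D S)^2) ((Pd (S \<inter> {1..n}))^2)"
    unfolding power2_eq_square by (intro cong_mult D_cong_trunc)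
  also have "(Pd (S \<inter> {1..n}))^2 = Pd ((*) 2 ` (S \<inter> {1..n}))"
    by (simp add: Pd_double)
  finally have 1: "cong (Suc n) ((D S)^2) (Pd ((*) 2 ` (S \<inter> {1..n})))" .
  have 2: "cong (Suc n) (D ((*) 2 ` S)) (Pd ((*) 2 ` (S \<inter> {1..n})))"
    by (rule D_cong) (auto simp: image_iff)
  from 1 2 show "D ((*) 2 ` S) $ n = (D S)^2 $ n"
    by (meson cong_sym cong_trans cong_nth lessI)
qed

lemma D_one: "D {1} = 1 + fps_X"
proof (rule fps_ext)
  fix n show "D {1} $ n = (1 + fps_X) $ n"
  proof (cases n)
    case 0 thus ?thesis by simp
  next
    case (Suc m)
    hence "{1::nat} \<inter> {1..n} = {1}" by auto
    thus ?thesis by (simp add: D_def Pd_def)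
  qed
qed

lemma D_empty[simp]: "D {} = 1"
  by (rule fps_ext) (simp add: D_def)

lemma D_ne0: "D S \<noteq> 0"
  using D_nth0[of S] by (metis fps_zero_nth zero_neq_one)


lemma prodX_ge: "finite G \<Longrightarrow> (\<forall>m\<in>G. K \<le> e m) \<Longrightarrow> cong K (\<Prod>m\<in>G. 1 + fps_X ^ e m) 1"
proof (induction G rule: finite_induct)
  case empty thus ?case by simp
next
  case (insert x G)
  have eq: "(\<Prod>m\<in>insert x G. 1 + fps_X ^ e m) = (\<Prod>m\<in>G. 1 + fps_X ^ e m) + fps_X ^ e x * (\<Prod>m\<in>G. 1 + fps_X ^ e m)"
    using insert by (simp add: algebra_simps)
  have "cong K ((\<Prod>m\<in>G. 1 + fps_X ^ e m) + fps_X ^ e x * (\<Prod>m\<in>G. 1 + fps_X ^ e m)) (1 + 0)"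
    using insert by (intro cong_add cong_Xpow_zero) auto
  hence "cong K (\<Prod>m\<in>insert x G. 1 + fps_X ^ e m) (1 + 0)" by (subst eq)
  thus ?case by simp
qed

fun tri :: "nat \<Rightarrow> nat" where
  "tri 0 = 0"
| "tri (Suc k) = tri k + k"

fun qb :: "nat \<Rightarrow> nat \<Rightarrow> nat \<Rightarrow> bfps" where
  "qb a 0 k = (if k = 0 then 1 else 0)"
| "qb a (Suc M) 0 = 1"
| "qb a (Suc M) (Suc k) = qb a M (Suc k) + fps_X ^ (a * (M - k)) * qb a M k"

lemma qb_0[simp]: "qb a M 0 = 1" by (cases M) auto

lemma qb_zero: "M < k \<Longrightarrow> qb a M k = 0"
proof (induction M arbitrary: k)
  case 0 thus ?case by simp
next
  case (Suc M) then obtain k' where "k = Suc k'" by (cases k) auto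
  with Suc show ?case by simp
qed

lemma qb_diag[simp]: "qb a M M = 1"
  by (induction M) (auto simp: qb_zero)

definition P :: "nat \<Rightarrow> nat \<Rightarrow> bfps" where
  "P a n = (\<Prod>m\<in>{1..n}. 1 + fps_X ^ (a * m))"

lemma P_0[simp]: "P a 0 = 1" by (simp add: P_def)
lemma P_Suc: "P a (Suc n) = P a n * (1 + fps_X ^ (a * Suc n))"
  by (simp add: P_def mult.commute)
lemma P_nth0[simp]: "0 < a \<Longrightarrow> P a n $ 0 = 1"
proof (induction n)
  case 0 thus ?case by simp
next
  case (Suc n) thus ?case by (simp add: P_Suc)
qed

lemma qb_prod: "k \<le> M \<Longrightarrow> qb a M k * P a k * P a (M - k) = P a M"
proof (induction M arbitrary: k)
  case 0 thus ?case by simp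
next
  case (Suc M)
  show ?case
  proof (cases k)
    case 0 thus ?thesis by simp
  next
    case (Suc k')
    show ?thesis
    proof (cases "k' = M")
      case True thus ?thesis using Suc by (simp add: qb_zero)
    next
      case False
      hence lt: "k' < M" using Suc Suc.prems by simp
      define d where "d = M - k'"
      have d1: "d \<ge> 1" and d2: "Suc M - Suc k' = d" and d3: "M - Suc k' = d - 1" using lt by (auto simp: d_def)
      have Pd': "P a d = P a (d - 1) * (1 + fps_X ^ (a * d))" using d1 P_Suc[of a "d - 1"] by simp
      have IH1: "qb a M (Suc k') * P a (Suc k') * P a (d - 1) = P a M" using Suc.IH[of "Suc k'"] lt d3 by simp
      have IH2: "qb a M k' * P a k' * P a d = P a M" using Suc.IH[of k'] lt d_def by simp
      define x1 where "x1 = qb a M (Suc k')"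
      define x0 where "x0 = qb a M k'"
      define p where "p = P a k'"
      define q where "q = P a (d - 1)"
      define u :: bfps where "u = fps_X ^ (a * d)"
      define w :: bfps where "w = fps_X ^ (a * Suc k')"
      define PM where "PM = P a M"
      have e0: "qb a (Suc M) k * P a k * P a (Suc M - k) = (x1 + u * x0) * (p * (1 + w)) * (q * (1 + u))"
        using Suc d2 Pd' by (simp add: x1_def x0_def p_def q_def u_def w_def d_def P_Suc)
      have e1: "(x1 + u * x0) * (p * (1 + w)) * (q * (1 + u)) = (x1 * (p * (1 + w)) * q) * (1 + u) + u * (x0 * p * (q * (1 + u))) * (1 + w)"
        by (simp add: algebra_simps)
      have i1: "x1 * (p * (1 + w)) * q = PM" using IH1 by (simp add: x1_def p_def w_def q_def PM_def P_Suc)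
      have i2: "x0 * p * (q * (1 + u)) = PM" using IH2 by (simp add: x0_def p_def q_def u_def PM_def Pd')
      have e2: "PM * (1 + u) + u * PM * (1 + w) = PM * (1 + u * w) + (u * PM + u * PM)"
        by (simp add: algebra_simps)
      have e3: "u * w = fps_X ^ (a * Suc M)"
      proof -
        have "d + Suc k' = Suc M" using lt by (simp add: d_def)
        hence "a * d + a * Suc k' = a * Suc M" by (metis add_mult_distrib2)
        thus ?thesis by (simp only: u_def w_def power_add[symmetric])
      qed
      have "qb a (Suc M) k * P a k * P a (Suc M - k) = PM * (1 + u) + u * PM * (1 + w)"
        by (simp only: e0 e1 i1 i2)
      also have "\<dots> = PM * (1 + u * w) + (u * PM + u * PM)" by (rule e2)
      also have "\<dots> = PM * (1 + fps_X ^ (a * Suc M))" by (simp only: bfps_add_self add_0_right e3)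
      finally show ?thesis by (simp add: P_Suc PM_def)
    qed
  qed
qed

lemma rothe:
  "(\<Prod>u<M. v + w * fps_X ^ (a * u)) = (\<Sum>k\<le>M. w ^ k * v ^ (M - k) * fps_X ^ (a * tri k) * qb a M k)"
proof (induction M)
  case 0 thus ?case by simp
next
  case (Suc M)
  define T where "T = (\<lambda>k. w ^ k * v ^ (M - k) * fps_X ^ (a * tri k) * qb a M k)"
  define T' where "T' = (\<lambda>k. w ^ k * v ^ (Suc M - k) * fps_X ^ (a * tri k) * qb a M k)"
  define A where "A = (\<lambda>k. w ^ Suc k * v ^ (M - k) * fps_X ^ (a * tri (Suc k)) * qb a M (Suc k))"
  have e1: "(\<Sum>k\<le>Suc M. w ^ k * v ^ (Suc M - k) * fps_X ^ (a * tri k) * qb a (Suc M) k)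
      = v ^ Suc M + (\<Sum>k\<le>M. A k + T k * (w * fps_X ^ (a * M)))"
  proof -
    have "(\<Sum>k\<le>Suc M. w ^ k * v ^ (Suc M - k) * fps_X ^ (a * tri k) * qb a (Suc M) k)
        = v ^ Suc M + (\<Sum>k\<le>M. w ^ Suc k * v ^ (Suc M - Suc k) * fps_X ^ (a * tri (Suc k)) * qb a (Suc M) (Suc k))"
      by (subst sum.atMost_Suc_shift) (simp only: tri.simps qb_0 power_0 mult_1_left mult_1_right mult_0_right diff_zero)
    also have "(\<Sum>k\<le>M. w ^ Suc k * v ^ (Suc M - Suc k) * fps_X ^ (a * tri (Suc k)) * qb a (Suc M) (Suc k))
        = (\<Sum>k\<le>M. A k + T k * (w * fps_X ^ (a * M)))"
    proof (intro sum.cong refl)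
      fix k assume "k \<in> {..M}"
      hence "tri (Suc k) + (M - k) = tri k + M" by simp
      hence "a * tri (Suc k) + a * (M - k) = a * tri k + a * M" by (metis add_mult_distrib2)
      hence X: "fps_X ^ (a * tri (Suc k)) * fps_X ^ (a * (M - k)) = fps_X ^ (a * tri k) * (fps_X ^ (a * M) :: bfps)"
        by (simp only: power_add[symmetric])
      have L: "w ^ Suc k * v ^ (M - k) * fps_X ^ (a * tri (Suc k)) * (fps_X ^ (a * (M - k)) * qb a M k)
          = (w * w ^ k * v ^ (M - k) * qb a M k) * (fps_X ^ (a * tri (Suc k)) * fps_X ^ (a * (M - k)))"
        by (simp only: ac_simps power_Suc)
      have R: "T k * (w * fps_X ^ (a * M)) = (w * w ^ k * v ^ (M - k) * qb a M k) * (fps_X ^ (a * tri k) * fps_X ^ (a * M))"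
        unfolding T_def by (simp only: ac_simps)
      show "w ^ Suc k * v ^ (Suc M - Suc k) * fps_X ^ (a * tri (Suc k)) * qb a (Suc M) (Suc k) = A k + T k * (w * fps_X ^ (a * M))"
        unfolding qb.simps(3) diff_Suc_Suc distrib_left L R X by (simp only: A_def)
    qed
    finally show ?thesis .
  qed
  have e2: "v ^ Suc M + (\<Sum>k\<le>M. A k) = (\<Sum>k\<le>M. T k * v)"
  proof -
    have "(\<Sum>k\<le>Suc M. T' k) = T' 0 + (\<Sum>k\<le>M. T' (Suc k))"
      by (rule sum.atMost_Suc_shift)
    also have "T' 0 = v ^ Suc M" unfolding T'_def
      by (simp only: tri.simps qb_0 power_0 mult_1_left mult_1_right mult_0_right diff_zero)
    also have "(\<Sum>k\<le>M. T' (Suc k)) = (\<Sum>k\<le>M. A k)"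
      unfolding T'_def A_def by (simp only: diff_Suc_Suc)
    finally have 1: "(\<Sum>k\<le>Suc M. T' k) = v ^ Suc M + (\<Sum>k\<le>M. A k)" .
    have 2: "(\<Sum>k\<le>Suc M. T' k) = (\<Sum>k\<le>M. T' k)"
      unfolding sum.atMost_Suc T'_def by (simp add: qb_zero)
    have 3: "(\<Sum>k\<le>M. T' k) = (\<Sum>k\<le>M. T k * v)"
    proof (intro sum.cong refl)
      fix k assume "k \<in> {..M}"
      hence "v ^ (Suc M - k) = v ^ (M - k) * v" by (simp add: Suc_diff_le)
      thus "T' k = T k * v" unfolding T'_def T_def by (simp only: ac_simps)
    qed
    from 1 2 3 show ?thesis by simp
  qed
  have "(\<Prod>u<Suc M. v + w * fps_X ^ (a * u)) = (\<Sum>k\<le>M. T k) * (v + w * fps_X ^ (a * M))"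
    using Suc by (simp add: T_def)
  also have "\<dots> = (\<Sum>k\<le>M. T k * v) + (\<Sum>k\<le>M. T k * (w * fps_X ^ (a * M)))"
    by (simp only: sum_distrib_right distrib_left sum.distrib)
  also have "\<dots> = v ^ Suc M + (\<Sum>k\<le>M. A k) + (\<Sum>k\<le>M. T k * (w * fps_X ^ (a * M)))"
    by (simp only: e2)
  also have "\<dots> = v ^ Suc M + (\<Sum>k\<le>M. A k + T k * (w * fps_X ^ (a * M)))"
    by (simp only: sum.distrib add.assoc)
  finally show ?case using e1 by simp
qed

lemma P_split: "i \<le> j \<Longrightarrow> P a j = P a i * (\<Prod>m\<in>{i<..j}. 1 + fps_X ^ (a * m))"
proof -
  assume "i \<le> j"
  hence "{1..j} = {1..i} \<union> {i<..j}" by auto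
  thus ?thesis unfolding P_def by (simp add: prod.union_disjoint ivl_disj_int)
qed

lemma P_cong_le: "i \<le> j \<Longrightarrow> cong (a * (i + 1)) (P a j) (P a i)"
proof -
  assume ij: "i \<le> j"
  have "cong (a * (i + 1)) (\<Prod>m\<in>{i<..j}. 1 + fps_X ^ (a * m)) 1"
  proof (rule prodX_ge)
    show "\<forall>m\<in>{i<..j}. a * (i + 1) \<le> a * m"
    proof
      fix m assume "m \<in> {i<..j}" hence "i + 1 \<le> m" by simp
      thus "a * (i + 1) \<le> a * m" by (rule mult_le_mono2)
    qed
  qed simp
  from cong_mult_left[OF this, of "P a i"] show ?thesis using P_split[OF ij] by simp
qed

lemma P_cong: "cong (a * (min i j + 1)) (P a i) (P a j)"
proof (cases "i \<le> j")
  case True thus ?thesis using P_cong_le[OF True] by (simp add: min_def cong_sym)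
next
  case False thus ?thesis using P_cong_le[of j i a] by (simp add: min_def)
qed

lemma P_cong': "r \<le> i \<Longrightarrow> r \<le> j \<Longrightarrow> cong (a * (r + 1)) (P a i) (P a j)"
  by (rule cong_mono[OF P_cong]) simp

lemma QB:
  assumes "k \<le> M" "min k (M - k) \<le> L" "0 < a"
  shows "cong (a * (min k (M - k) + 1)) (qb a M k * P a L) 1"
proof -
  define r where "r = min k (M - k)"
  define K where "K = a * (r + 1)"
  have c1: "cong K (P a k) (P a L)" "cong K (P a (M - k)) (P a L)" "cong K (P a M) (P a L)"
    unfolding K_def by (rule P_cong'; use assms in \<open>auto simp: r_def\<close>)+
  have "cong K (qb a M k * P a L * P a L) (qb a M k * P a k * P a (M - k))"
    using c1 by (intro cong_mult cong_refl) (auto intro: cong_sym)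
  also have "qb a M k * P a k * P a (M - k) = P a M" using qb_prod[OF assms(1)] .
  finally have "cong K ((qb a M k * P a L) * P a L) (1 * P a L)"
    using c1(3) cong_trans by (simp add: mult.assoc)
  hence "cong K (qb a M k * P a L) 1" by (rule cong_cancel) (simp add: assms)
  thus ?thesis by (simp add: K_def r_def)
qed

lemma QB2:
  assumes "k \<le> M" "0 < a"
  shows "cong (a * (M - k + 1)) (qb a M k * P a M) (\<Prod>m\<in>{k<..M}. 1 + fps_X ^ (a * m))"
proof -
  define R :: bfps where "R = (\<Prod>m\<in>{k<..M}. 1 + fps_X ^ (a * m))"
  define K where "K = a * (M - k + 1)"
  have PM: "P a M = P a k * R" using P_split[OF assms(1)] by (simp add: R_def)
  have c: "cong K (P a M) (P a (M - k))" unfolding K_def by (rule P_cong') auto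
  have "cong K (qb a M k * P a M * P a M) (qb a M k * P a M * P a (M - k))"
    by (intro cong_mult_left c)
  also have "qb a M k * P a M * P a (M - k) = R * P a M"
    using qb_prod[OF assms(1), of a] PM by (simp add: algebra_simps)
  finally have "cong K ((qb a M k * P a M) * P a M) (R * P a M)" .
  hence "cong K (qb a M k * P a M) R" by (rule cong_cancel) (simp add: assms)
  thus ?thesis by (simp add: K_def R_def)
qed


lemma tri_sq: "k + 2 * tri k = k * k"
  by (induction k) (auto simp: algebra_simps)

lemma D_minus0: "D (S - {0}) = D S"
  by (rule fps_ext) (simp add: D_def Diff_Int_distrib2 Int_absorb2 atLeastAtMost_iff) 

lemma D_insert0: "D (insert 0 S) = D S"
  by (rule fps_ext) (simp add: D_def)

lemma Pd_reindex: "inj_on f A \<Longrightarrow> Pd (f ` A) = (\<Prod>x\<in>A. 1 + fps_X ^ f x)"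
  unfolding Pd_def by (simp add: prod.reindex)

definition ODD :: "nat set" where "ODD = {x. odd x}"
definition T :: "nat \<Rightarrow> nat set" where "T k = (*) 2 ` {k<..}"

lemma euler_odd:
  "cong (Suc N) (D ODD * D (T 0)) (\<Sum>k\<le>N. fps_X ^ (k * k) * D (T k))"
proof -
  define M where "M = 2 * N"
  have o1: "Pd ((\<lambda>u. 2 * u + 1) ` {..<M}) = (\<Prod>u<M. 1 + fps_X * fps_X ^ (2 * u))"
    by (subst Pd_reindex) (auto simp: inj_on_def power_Suc)
  also have "\<dots> = (\<Sum>k\<le>M. fps_X ^ (k * k) * qb 2 M k)"
    by (subst rothe) (simp add: tri_sq[symmetric] power_add mult.assoc)
  finally have o2: "Pd ((\<lambda>u. 2 * u + 1) ` {..<M}) * P 2 M = (\<Sum>k\<le>M. fps_X ^ (k * k) * (qb 2 M k * P 2 M))"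
    by (simp add: sum_distrib_right mult.assoc)
  have c1: "cong (Suc N) (fps_X ^ (k * k) * (qb 2 M k * P 2 M)) (fps_X ^ (k * k) * D (T k))"
    if k: "k \<le> M" for k
  proof (cases "Suc N \<le> k * k")
    case True thus ?thesis by (meson cong_Xpow_zero cong_sym cong_trans)
  next
    case False
    hence kN: "k \<le> N" by (metis le_square le_trans not_less_eq_eq)
    have "cong (2 * (M - k + 1)) (qb 2 M k * P 2 M) (\<Prod>m\<in>{k<..M}. 1 + fps_X ^ (2 * m))"
      using QB2[OF k, of 2] by simp
    hence "cong (Suc N) (qb 2 M k * P 2 M) (\<Prod>m\<in>{k<..M}. 1 + fps_X ^ (2 * m))"
      by (rule cong_mono) (use kN in \<open>simp add: M_def\<close>)
    moreover have "(\<Prod>m\<in>{k<..M}. 1 + fps_X ^ (2 * m)) = Pd ((*) 2 ` {k<..M})"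
      by (subst Pd_reindex) (auto simp: inj_on_def)
    moreover have "cong (Suc N) (D (T k)) (Pd ((*) 2 ` {k<..M}))"
      by (rule D_cong) (auto simp: T_def M_def image_iff)
    ultimately show ?thesis by (metis cong_Xpow_mult cong_sym cong_trans)
  qed
  have "cong (Suc N) (Pd ((\<lambda>u. 2 * u + 1) ` {..<M}) * P 2 M) (\<Sum>k\<le>M. fps_X ^ (k * k) * D (T k))"
    unfolding o2 by (rule cong_sum) (use c1 in auto)
  also have "(\<Sum>k\<le>M. fps_X ^ (k * k) * D (T k)) = (\<Sum>k\<le>N. fps_X ^ (k * k) * D (T k)) + (\<Sum>k\<in>{N<..M}. fps_X ^ (k * k) * D (T k))"
  proof -
    have e: "{..M} = {..N} \<union> {N<..M}" by (auto simp: M_def)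
    show ?thesis unfolding e by (rule sum.union_disjoint) auto
  qed
  finally have c2: "cong (Suc N) (Pd ((\<lambda>u. 2 * u + 1) ` {..<M}) * P 2 M)
      ((\<Sum>k\<le>N. fps_X ^ (k * k) * D (T k)) + (\<Sum>k\<in>{N<..M}. fps_X ^ (k * k) * D (T k)))" .
  have c3: "cong (Suc N) (\<Sum>k\<in>{N<..M}. fps_X ^ (k * k) * D (T k)) (\<Sum>k\<in>{N<..M}. 0)"
  proof (rule cong_sum)
    fix k assume "k \<in> {N<..M}"
    hence "Suc N \<le> k * k" by (metis greaterThanAtMost_iff le_square le_trans Suc_leI)
    thus "cong (Suc N) (fps_X ^ (k * k) * D (T k)) 0" by (rule cong_Xpow_zero)
  qed
  have c4: "cong (Suc N) (D ODD) (Pd ((\<lambda>u. 2 * u + 1) ` {..<M}))"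
  proof (rule D_cong)
    show "(\<lambda>u. 2 * u + 1) ` {..<M} \<inter> {..<Suc N} = (ODD - {0}) \<inter> {..<Suc N}"
    proof (intro equalityI subsetI)
      fix x assume "x \<in> (ODD - {0}) \<inter> {..<Suc N}"
      hence "odd x" "x \<le> N" by (auto simp: ODD_def)
      hence "x = 2 * (x div 2) + 1" "x div 2 < M" unfolding M_def by presburger+
      thus "x \<in> (\<lambda>u. 2 * u + 1) ` {..<M} \<inter> {..<Suc N}" using \<open>x \<le> N\<close> by (metis IntI image_eqI lessThan_iff le_imp_less_Suc)
    qed (auto simp: ODD_def)
  qed simp
  have c5: "cong (Suc N) (D (T 0)) (P 2 M)"
  proof -
    have "P 2 M = Pd ((*) 2 ` {1..M})" unfolding P_def by (subst Pd_reindex) (auto simp: inj_on_def)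
    moreover have "cong (Suc N) (D (T 0)) (Pd ((*) 2 ` {1..M}))"
      by (rule D_cong) (auto simp: T_def M_def image_iff)
    ultimately show ?thesis by simp
  qed
  have "cong (Suc N) (D ODD * D (T 0)) (Pd ((\<lambda>u. 2 * u + 1) ` {..<M}) * P 2 M)"
    using c4 c5 by (rule cong_mult)
  from cong_trans[OF this cong_trans[OF c2 cong_add[OF cong_refl c3]]] show ?thesis by simp
qed


lemma prod_lessThan_add: "(\<Prod>u<m + (k::nat). f u) = (\<Prod>u<m. f u) * (\<Prod>u<k. f (m + u))"
  by (induction k) (simp_all add: mult.assoc)

lemma sum_tri: "(\<Sum>u<n. u) = tri n"
  by (induction n) simp_all

lemma tri2: "2 * int (tri k) = int k * (int k - 1)"
  by (induction k) (simp_all add: algebra_simps)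

definition trz :: "int \<Rightarrow> int" where "trz t = t * (t - 1) div 2"

lemma trz2: "2 * trz t = t * (t - 1)"
proof -
  have "even (t * (t - 1))" by simp
  thus ?thesis unfolding trz_def by simp
qed

definition eet :: "nat \<Rightarrow> nat \<Rightarrow> int \<Rightarrow> int" where
  "eet a c t = int c * t + int a * trz t"

lemma eet_ge_abs:
  assumes "0 < c" "c < a"
  shows "eet a c t \<ge> \<bar>t\<bar>"
proof (cases "t \<ge> 0")
  case True
  have "t * (t - 1) \<ge> 0"
  proof (cases "t = 0")
    case False with True show ?thesis by (intro mult_nonneg_nonneg) auto
  qed simp
  hence "trz t \<ge> 0" using trz2[of t] by linarith
  hence "int a * trz t \<ge> 0" by simp
  moreover have "int c * t \<ge> t" using True assms by (simp add: mult_right_mono[of 1 "int c" t, simplified])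
  ultimately show ?thesis using True unfolding eet_def by simp
next
  case False
  have "(-t) * (-t - 1) \<ge> 0" using False by (intro mult_nonneg_nonneg) auto
  hence "t * (t - 1) \<ge> -2 * t" by (simp add: algebra_simps)
  hence tz: "trz t \<ge> -t" using trz2[of t] by linarith
  have "int a * trz t \<ge> int a * (-t)" using mult_left_mono[OF tz, of "int a"] by simp
  moreover have "(int a - int c - 1) * (-t) \<ge> 0" using False assms by (intro mult_nonneg_nonneg) auto
  ultimately show ?thesis using False unfolding eet_def by (simp add: algebra_simps)
qed

definition ee :: "nat \<Rightarrow> nat \<Rightarrow> nat \<Rightarrow> nat \<Rightarrow> nat" where
  "ee a c n k = nat (eet a c (int k - int n))"

lemma exp_identity:
  assumes "0 < c" "c < a" "k \<le> 2 * n"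
  shows "c * k + a * n * (2 * n - k) + a * tri k = (c * n + a * tri n + a * n * n) + ee a c n k"
proof -
  define t where "t = int k - int n"
  have nn: "eet a c t \<ge> 0" using eet_ge_abs[OF assms(1,2), of t] by linarith
  have d: "int (2 * n - k) = 2 * int n - int k" using assms(3) by simp
  have "int (c * k + a * n * (2 * n - k) + a * tri k) = int c * int k + int a * int n * (2 * int n - int k) + int a * int (tri k)"
    by (simp only: of_nat_add of_nat_mult d)
  hence "2 * int (c * k + a * n * (2 * n - k) + a * tri k)
      = 2 * int c * int k + 2 * int a * int n * (2 * int n - int k) + int a * (2 * int (tri k))"
    by (simp add: algebra_simps)
  also have "\<dots> = 2 * int c * int k + 2 * int a * int n * (2 * int n - int k) + int a * (int k * (int k - 1))"
    by (simp only: tri2)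
  also have "\<dots> = 2 * int c * int n + int a * (int n * (int n - 1)) + 2 * int a * int n * int n + 2 * int c * t + int a * (t * (t - 1))"
    by (simp add: t_def algebra_simps)
  also have "\<dots> = 2 * int c * int n + int a * (2 * int (tri n)) + 2 * int a * int n * int n + 2 * eet a c t"
  proof -
    have E2: "2 * eet a c t = 2 * int c * t + int a * (t * (t - 1))"
    proof -
      have "2 * eet a c t = 2 * int c * t + int a * (2 * trz t)" by (simp add: eet_def algebra_simps)
      thus ?thesis by (simp only: trz2)
    qed
    have T2: "int a * (2 * int (tri n)) = int a * (int n * (int n - 1))" by (simp only: tri2)
    show ?thesis by (simp only: E2 T2)
  qed
  also have "\<dots> = 2 * int ((c * n + a * tri n + a * n * n) + ee a c n k)"
    using nn by (simp add: ee_def t_def algebra_simps)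
  finally have h: "2 * int (c * k + a * n * (2 * n - k) + a * tri k) = 2 * int ((c * n + a * tri n + a * n * n) + ee a c n k)" .
  have "int (c * k + a * n * (2 * n - k) + a * tri k) = int ((c * n + a * tri n + a * n * n) + ee a c n k)"
    using h by (simp only: mult_cancel_left) simp
  thus ?thesis by (simp only: of_nat_eq_iff)
qed

lemma Pd_union: "finite F \<Longrightarrow> finite G \<Longrightarrow> F \<inter> G = {} \<Longrightarrow> Pd (F \<union> G) = Pd F * Pd G"
  unfolding Pd_def by (rule prod.union_disjoint)

definition Fa :: "nat \<Rightarrow> nat \<Rightarrow> nat \<Rightarrow> nat set" where
  "Fa a c n = (\<lambda>j. a * (n - j) - c) ` {..<n}"
definition Fb :: "nat \<Rightarrow> nat \<Rightarrow> nat \<Rightarrow> nat set" where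
  "Fb a c n = (\<lambda>j. c + a * j) ` {..<n}"

lemma jtp_finite:
  assumes "0 < c" "c < a"
  shows "Pd (Fa a c n) * Pd (Fb a c n) = (\<Sum>k\<le>2 * n. fps_X ^ ee a c n k * qb a (2 * n) k)"
proof -
  define A where "A = c * n + a * tri n + a * n * n"
  have inja: "inj_on (\<lambda>j. a * (n - j) - c) {..<n}"
  proof (rule inj_onI)
    fix x y assume xy: "x \<in> {..<n}" "y \<in> {..<n}" "a * (n - x) - c = a * (n - y) - c"
    have "a * 1 \<le> a * (n - x)" "a * 1 \<le> a * (n - y)" using xy(1,2) by (intro mult_le_mono2; simp)+
    hence "a * (n - x) = a * (n - y)" using xy(3) assms by linarith
    thus "x = y" using xy(1,2) assms by simp
  qed
  have injb: "inj_on (\<lambda>j. c + a * j) {..<n}" using assms by (auto simp: inj_on_def)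
  have f1: "fps_X ^ (a * n) + fps_X ^ c * fps_X ^ (a * u) = fps_X ^ (c + a * u) * (1 + fps_X ^ (a * (n - u) - c) :: bfps)"
    if "u < n" for u
  proof -
    have "a * 1 \<le> a * (n - u)" using that by (intro mult_le_mono2) simp
    hence "c + a * u + (a * (n - u) - c) = a * n" using that assms
      by (simp add: diff_mult_distrib2) 
    hence h: "fps_X ^ (c + a * u) * fps_X ^ (a * (n - u) - c) = (fps_X ^ (a * n) :: bfps)"
      by (simp only: power_add[symmetric])
    have "fps_X ^ (c + a * u) * (1 + fps_X ^ (a * (n - u) - c)) = fps_X ^ (c + a * u) + (fps_X ^ (a * n) :: bfps)"
      by (simp only: distrib_left mult_1_right h)
    also have "\<dots> = fps_X ^ (a * n) + fps_X ^ c * fps_X ^ (a * u)"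
      by (simp only: power_add add.commute)
    finally show ?thesis by simp
  qed
  have f2: "fps_X ^ (a * n) + fps_X ^ c * fps_X ^ (a * (n + u)) = fps_X ^ (a * n) * (1 + fps_X ^ (c + a * u) :: bfps)" for u
  proof -
    have "a * n + (c + a * u) = c + a * (n + u)" by (simp add: algebra_simps)
    hence "fps_X ^ (a * n) * fps_X ^ (c + a * u) = fps_X ^ c * (fps_X ^ (a * (n + u)) :: bfps)"
      by (simp only: power_add[symmetric])
    thus ?thesis by (simp add: distrib_left)
  qed
  have "(\<Prod>u<2 * n. fps_X ^ (a * n) + fps_X ^ c * fps_X ^ (a * u) :: bfps)
      = (\<Prod>u<n. fps_X ^ (a * n) + fps_X ^ c * fps_X ^ (a * u)) * (\<Prod>u<n. fps_X ^ (a * n) + fps_X ^ c * fps_X ^ (a * (n + u)))"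
    using prod_lessThan_add[where m=n and k=n] by (simp add: mult_2)
  also have "\<dots> = (\<Prod>u<n. fps_X ^ (c + a * u) * (1 + fps_X ^ (a * (n - u) - c))) * (\<Prod>u<n. fps_X ^ (a * n) * (1 + fps_X ^ (c + a * u)))"
    using f1 f2 by simp
  also have "\<dots> = fps_X ^ (\<Sum>u<n. c + a * u) * Pd (Fa a c n) * (fps_X ^ (a * n * n) * Pd (Fb a c n))"
  proof -
    have pc: "(\<Prod>u<n. fps_X ^ (a * n) :: bfps) = fps_X ^ (a * n * n)" by (simp add: power_mult)
    show ?thesis
      unfolding prod.distrib Fa_def Fb_def Pd_reindex[OF inja] Pd_reindex[OF injb] power_sum
      by (simp only: pc ac_simps)
  qed
  also have "(\<Sum>u<n. c + a * u) = c * n + a * tri n"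
    by (simp add: sum.distrib sum_distrib_left[symmetric] sum_tri[symmetric])
  finally have L: "(\<Prod>u<2 * n. fps_X ^ (a * n) + fps_X ^ c * fps_X ^ (a * u)) = fps_X ^ A * (Pd (Fa a c n) * Pd (Fb a c n))"
    by (simp add: A_def power_add ac_simps)
  have "(\<Prod>u<2 * n. fps_X ^ (a * n) + fps_X ^ c * fps_X ^ (a * u) :: bfps)
      = (\<Sum>k\<le>2 * n. (fps_X ^ c) ^ k * (fps_X ^ (a * n)) ^ (2 * n - k) * fps_X ^ (a * tri k) * qb a (2 * n) k)"
    by (rule rothe)
  also have "\<dots> = (\<Sum>k\<le>2 * n. fps_X ^ A * (fps_X ^ ee a c n k * qb a (2 * n) k))"
  proof (intro sum.cong refl)
    fix k assume "k \<in> {..2 * n}"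
    hence "c * k + a * n * (2 * n - k) + a * tri k = A + ee a c n k"
      using exp_identity[OF assms] by (simp add: A_def)
    hence "(fps_X ^ c) ^ k * (fps_X ^ (a * n)) ^ (2 * n - k) * fps_X ^ (a * tri k) = fps_X ^ A * (fps_X ^ ee a c n k :: bfps)"
      by (simp only: power_mult[symmetric] power_add[symmetric])
    thus "(fps_X ^ c) ^ k * (fps_X ^ (a * n)) ^ (2 * n - k) * fps_X ^ (a * tri k) * qb a (2 * n) k
        = fps_X ^ A * (fps_X ^ ee a c n k * qb a (2 * n) k)" by (simp add: mult.assoc)
  qed
  also have "\<dots> = fps_X ^ A * (\<Sum>k\<le>2 * n. fps_X ^ ee a c n k * qb a (2 * n) k)"
    by (simp add: sum_distrib_left)
  finally show ?thesis using L by (metis Xpow_cancel)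
qed

lemma jtp_cong:
  assumes "0 < c" "c < a" "2 * N \<le> n"
  shows "cong (Suc N) (Pd (Fa a c n) * Pd (Fb a c n) * P a n) (\<Sum>k\<le>2 * n. fps_X ^ ee a c n k)"
proof -
  have "Pd (Fa a c n) * Pd (Fb a c n) * P a n = (\<Sum>k\<le>2 * n. fps_X ^ ee a c n k * (qb a (2 * n) k * P a n))"
    by (simp add: jtp_finite[OF assms(1,2)] sum_distrib_right mult.assoc)
  moreover have "cong (Suc N) (\<Sum>k\<le>2 * n. fps_X ^ ee a c n k * (qb a (2 * n) k * P a n)) (\<Sum>k\<le>2 * n. fps_X ^ ee a c n k)"
  proof (rule cong_sum)
    fix k assume k: "k \<in> {..2 * n}"
    show "cong (Suc N) (fps_X ^ ee a c n k * (qb a (2 * n) k * P a n)) (fps_X ^ ee a c n k)"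
    proof (cases "Suc N \<le> ee a c n k")
      case True
      hence "cong (Suc N) (fps_X ^ ee a c n k * (qb a (2 * n) k * P a n)) 0"
        "cong (Suc N) (fps_X ^ ee a c n k * 1) 0" by (rule cong_Xpow_zero)+
      thus ?thesis by (metis cong_sym cong_trans mult_1_right)
    next
      case False
      have "\<bar>int k - int n\<bar> \<le> eet a c (int k - int n)" by (rule eet_ge_abs[OF assms(1,2)])
      hence "\<bar>int k - int n\<bar> \<le> int N" using False unfolding ee_def by linarith
      hence m1: "N \<le> min k (2 * n - k)" using assms(3) k by auto
      have m2: "min k (2 * n - k) \<le> n" by auto
      have "cong (a * (min k (2 * n - k) + 1)) (qb a (2 * n) k * P a n) 1"
        using QB[of k "2 * n" n a] k m2 assms by simp
      moreover have "Suc N \<le> a * (min k (2 * n - k) + 1)"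
      proof -
        have "Suc N \<le> 1 * (min k (2 * n - k) + 1)" using m1 by simp
        also have "\<dots> \<le> a * (min k (2 * n - k) + 1)" using assms by (intro mult_le_mono1) simp
        finally show ?thesis .
      qed
      ultimately have "cong (Suc N) (qb a (2 * n) k * P a n) 1" by (rule cong_mono)
      from cong_Xpow_mult[OF this, of "ee a c n k"] show ?thesis by simp
    qed
  qed
  ultimately show ?thesis by simp
qed


abbreviation EE :: bfps where "EE \<equiv> D UNIV"

lemma D_T0: "D (T 0) = EE ^ 2"
proof -
  have "D (T 0) = (D {0<..})^2" unfolding T_def by (rule D_double)
  moreover have "D {0<..} = D (UNIV - {0})" by (rule arg_cong[where f = D]) auto
  ultimately show ?thesis by (simp add: D_minus0)
qed

lemma EE_split: "EE = D ODD * D (T 0)"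
proof -
  have u: "UNIV = insert 0 (ODD \<union> T 0)"
  proof (intro equalityI subsetI)
    fix x :: nat assume "x \<in> UNIV"
    show "x \<in> insert 0 (ODD \<union> T 0)"
    proof (cases "x = 0 \<or> odd x")
      case True thus ?thesis by (auto simp: ODD_def)
    next
      case False
      hence "x = 2 * (x div 2)" "x div 2 \<in> {0<..}" by auto
      thus ?thesis unfolding T_def by blast
    qed
  qed simp
  have d: "ODD \<inter> T 0 = {}" by (auto simp: ODD_def T_def)
  show ?thesis by (subst u) (simp add: D_insert0 D_mult[OF d])
qed

lemma EE_ODD: "D ODD * EE = 1"
proof -
  have "EE * (D ODD * EE) = EE * 1"
    using EE_split by (simp add: D_T0 power2_eq_square ac_simps)
  thus ?thesis using D_ne0[of UNIV] by simp
qed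

definition Q :: "nat set" where "Q = {x. x mod 4 \<noteq> 2}"

lemma DQ: "D Q = EE ^ 3"
proof -
  have u: "UNIV = Q \<union> (*) 2 ` ODD"
  proof (intro equalityI subsetI)
    fix x :: nat assume "x \<in> UNIV"
    show "x \<in> Q \<union> (*) 2 ` ODD"
    proof (cases "x mod 4 = 2")
      case True
      hence "x = 2 * (x div 2)" "odd (x div 2)" by presburger+
      thus ?thesis unfolding ODD_def by blast
    qed (simp add: Q_def)
  qed simp
  have d: "Q \<inter> (*) 2 ` ODD = {}" by (auto simp: Q_def ODD_def) presburger
  have "EE = D Q * (D ODD)^2" by (subst u) (simp add: D_mult[OF d] D_double)
  hence "EE * EE ^ 2 = D Q * (D ODD * EE)^2" by (simp add: power2_eq_square ac_simps)
  thus ?thesis by (simp add: EE_ODD power2_eq_square power3_eq_cube mult.assoc)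
qed

lemma Pd_union3:
  assumes "finite A" "finite B" "finite C" "A \<inter> B = {}" "A \<inter> C = {}" "B \<inter> C = {}"
  shows "Pd A * Pd B * Pd C = Pd (A \<union> B \<union> C)"
proof -
  have "Pd (A \<union> B \<union> C) = Pd (A \<union> B) * Pd C"
    by (rule Pd_union) (use assms in auto)
  also have "Pd (A \<union> B) = Pd A * Pd B" by (rule Pd_union) (use assms in auto)
  finally show ?thesis by (rule sym)
qed

lemma cover3:
  assumes "1 \<le> x" "x \<le> N" "2 * N + 2 \<le> n"
  shows "x \<in> Fa 3 2 n \<union> Fb 3 2 n \<union> (*) 3 ` {1..n}"
proof -
  define q where "q = x div 3"
  have xq: "x = 3 * q + x mod 3" unfolding q_def by simp
  have qx: "q \<le> x" unfolding q_def by simp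
  have "x mod 3 = 0 \<or> x mod 3 = 1 \<or> x mod 3 = 2" by arith
  moreover
  { assume "x mod 3 = 0"
    hence "x = 3 * q" "q \<in> {1..n}" using xq qx assms by auto
    hence "x \<in> (*) 3 ` {1..n}" by (intro image_eqI[where x=q]) auto
    hence ?thesis by (rule UnI2) }
  moreover
  { assume "x mod 3 = 1"
    hence "n - Suc q < n" "x = 3 * (n - (n - Suc q)) - 2" using xq qx assms by auto
    hence "x \<in> Fa 3 2 n" unfolding Fa_def by (intro image_eqI[where x="n - Suc q"]) auto
    hence ?thesis by (intro UnI1) }
  moreover
  { assume "x mod 3 = 2"
    hence "q < n" "x = 2 + 3 * q" using xq qx assms by auto
    hence "x \<in> Fb 3 2 n" unfolding Fb_def by (intro image_eqI[where x=q]) auto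
    hence ?thesis by (intro UnI1 UnI2) }
  ultimately show ?thesis by argo
qed

lemma cover4:
  assumes "1 \<le> x" "x \<le> N" "2 * N + 2 \<le> n" "x mod 4 \<noteq> 2"
  shows "x \<in> Fa 4 1 n \<union> Fb 4 1 n \<union> (*) 4 ` {1..n}"
proof -
  define q where "q = x div 4"
  have xq: "x = 4 * q + x mod 4" unfolding q_def by simp
  have qx: "q \<le> x" unfolding q_def by simp
  have "x mod 4 = 0 \<or> x mod 4 = 1 \<or> x mod 4 = 3" using assms(4) by arith
  moreover
  { assume "x mod 4 = 0"
    hence "x = 4 * q" "q \<in> {1..n}" using xq qx assms by auto
    hence "x \<in> (*) 4 ` {1..n}" by (intro image_eqI[where x=q]) auto
    hence ?thesis by (rule UnI2) }
  moreover
  { assume "x mod 4 = 3"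
    hence "n - Suc q < n" "x = 4 * (n - (n - Suc q)) - 1" using xq qx assms by auto
    hence "x \<in> Fa 4 1 n" unfolding Fa_def by (intro image_eqI[where x="n - Suc q"]) auto
    hence ?thesis by (intro UnI1) }
  moreover
  { assume "x mod 4 = 1"
    hence "q < n" "x = 1 + 4 * q" using xq qx assms by auto
    hence "x \<in> Fb 4 1 n" unfolding Fb_def by (intro image_eqI[where x=q]) auto
    hence ?thesis by (intro UnI1 UnI2) }
  ultimately show ?thesis by argo
qed

lemma Fa_mod:
  assumes "x \<in> Fa a c n" "0 < c" "c < a"
  shows "x mod a = a - c" "x \<noteq> 0"
proof -
  obtain j where j: "j < n" "x = a * (n - j) - c" using assms(1) unfolding Fa_def by auto
  define d where "d = n - j - 1"
  have "n - j = Suc d" using j(1) by (simp add: d_def)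
  hence "x = a + a * d - c" using j by simp
  hence x: "x = (a - c) + a * d" using assms by arith
  have "x mod a = (a - c) mod a" unfolding x by (rule mod_mult_self2)
  also have "\<dots> = a - c" using assms by simp
  finally show "x mod a = a - c" .
  show "x \<noteq> 0" using x assms by simp
qed

lemma Fb_mod:
  assumes "x \<in> Fb a c n" "c < a"
  shows "x mod a = c"
proof -
  obtain j where j: "x = c + a * j" using assms(1) unfolding Fb_def by auto
  have "x mod a = c mod a" unfolding j by (rule mod_mult_self2)
  thus ?thesis using assms by simp
qed

lemma disj_mod: "(\<And>x. x \<in> A \<Longrightarrow> (f :: nat \<Rightarrow> nat) x = u) \<Longrightarrow> (\<And>x. x \<in> B \<Longrightarrow> f x = v) \<Longrightarrow> u \<noteq> v \<Longrightarrow> A \<inter> B = {}"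
  by blast

lemma jtpP:
  "cong (Suc N) EE (\<Sum>k\<le>2 * (2 * N + 2). fps_X ^ ee 3 2 (2 * N + 2) k)"
proof -
  define n where "n = 2 * N + 2"
  define U where "U = Fa 3 2 n \<union> Fb 3 2 n \<union> (*) 3 ` {1..n}"
  have m1: "x mod 3 = 1" if "x \<in> Fa 3 2 n" for x using Fa_mod[OF that] by simp
  have m2: "x mod 3 = 2" if "x \<in> Fb 3 2 n" for x using Fb_mod[OF that] by simp
  have m3: "x mod 3 = 0" if "x \<in> (*) 3 ` {1..n}" for x using that by auto
  have P3: "P 3 n = Pd ((*) 3 ` {1..n})" unfolding P_def by (subst Pd_reindex) (auto simp: inj_on_def)
  have eq: "Pd (Fa 3 2 n) * Pd (Fb 3 2 n) * P 3 n = Pd U"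
    unfolding P3 U_def
  proof (rule Pd_union3)
    show "Fa 3 2 n \<inter> Fb 3 2 n = {}" by (rule disj_mod[where f="\<lambda>x. x mod 3" and u=1 and v=2], erule m1, erule m2, simp)
    show "Fa 3 2 n \<inter> (*) 3 ` {1..n} = {}" by (rule disj_mod[where f="\<lambda>x. x mod 3" and u=1 and v=0], erule m1, erule m3, simp)
    show "Fb 3 2 n \<inter> (*) 3 ` {1..n} = {}" by (rule disj_mod[where f="\<lambda>x. x mod 3" and u=2 and v=0], erule m2, erule m3, simp)
  qed (auto simp: Fa_def Fb_def)
  have "cong (Suc N) EE (Pd U)"
  proof (rule D_cong)
    show "finite U" by (simp add: U_def Fa_def Fb_def)
    show "U \<inter> {..<Suc N} = (UNIV - {0}) \<inter> {..<Suc N}"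
    proof (intro equalityI subsetI)
      fix x assume "x \<in> U \<inter> {..<Suc N}"
      thus "x \<in> (UNIV - {0}) \<inter> {..<Suc N}" unfolding U_def using Fa_mod(2)[of x 3 2 n, simplified] by (auto simp: Fb_def)
    next
      fix x assume x: "x \<in> (UNIV - {0}) \<inter> {..<Suc N}"
      hence x1: "1 \<le> x" "x \<le> N" by auto
      have "x \<in> U" unfolding U_def using cover3[OF x1] by (simp add: n_def)
      thus "x \<in> U \<inter> {..<Suc N}" using x by simp
    qed
  qed
  moreover have "cong (Suc N) (Pd U) (\<Sum>k\<le>2 * n. fps_X ^ ee 3 2 n k)"
    using jtp_cong[of 2 3 N n] eq by (simp add: n_def)
  ultimately show ?thesis using cong_trans n_def by blast
qed

lemma jtpT:
  "cong (Suc N) (EE ^ 3) (\<Sum>k\<le>2 * (2 * N + 2). fps_X ^ ee 4 1 (2 * N + 2) k)"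
proof -
  define n where "n = 2 * N + 2"
  define U where "U = Fa 4 1 n \<union> Fb 4 1 n \<union> (*) 4 ` {1..n}"
  have m1: "x mod 4 = 3" if "x \<in> Fa 4 1 n" for x using Fa_mod[OF that] by simp
  have m2: "x mod 4 = 1" if "x \<in> Fb 4 1 n" for x using Fb_mod[OF that] by simp
  have m3: "x mod 4 = 0" if "x \<in> (*) 4 ` {1..n}" for x using that by auto
  have P4: "P 4 n = Pd ((*) 4 ` {1..n})" unfolding P_def by (subst Pd_reindex) (auto simp: inj_on_def)
  have eq: "Pd (Fa 4 1 n) * Pd (Fb 4 1 n) * P 4 n = Pd U"
    unfolding P4 U_def
  proof (rule Pd_union3)
    show "Fa 4 1 n \<inter> Fb 4 1 n = {}" by (rule disj_mod[where f="\<lambda>x. x mod 4" and u=3 and v=1], erule m1, erule m2, simp)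
    show "Fa 4 1 n \<inter> (*) 4 ` {1..n} = {}" by (rule disj_mod[where f="\<lambda>x. x mod 4" and u=3 and v=0], erule m1, erule m3, simp)
    show "Fb 4 1 n \<inter> (*) 4 ` {1..n} = {}" by (rule disj_mod[where f="\<lambda>x. x mod 4" and u=1 and v=0], erule m2, erule m3, simp)
  qed (auto simp: Fa_def Fb_def)
  have "cong (Suc N) (D Q) (Pd U)"
  proof (rule D_cong)
    show "finite U" by (simp add: U_def Fa_def Fb_def)
    show "U \<inter> {..<Suc N} = (Q - {0}) \<inter> {..<Suc N}"
    proof (intro equalityI subsetI)
      fix x assume "x \<in> U \<inter> {..<Suc N}"
      thus "x \<in> (Q - {0}) \<inter> {..<Suc N}" unfolding U_def Q_def using m1 m2 m3 Fa_mod(2)[of x 4 1 n, simplified] by (auto simp: Fb_def)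
    next
      fix x assume x: "x \<in> (Q - {0}) \<inter> {..<Suc N}"
      hence x1: "1 \<le> x" "x \<le> N" "x mod 4 \<noteq> 2" by (auto simp: Q_def)
      have "x \<in> U" unfolding U_def using cover4[OF x1(1,2) _ x1(3)] by (simp add: n_def)
      thus "x \<in> U \<inter> {..<Suc N}" using x by simp
    qed
  qed
  moreover have "cong (Suc N) (Pd U) (\<Sum>k\<le>2 * n. fps_X ^ ee 4 1 n k)"
    using jtp_cong[of 1 4 N n] eq by (simp add: n_def)
  ultimately show ?thesis using cong_trans n_def DQ by metis
qed

lemma res11:
  fixes t :: int
  shows "(3 * t^2 + t) mod 11 \<notin> {5, 7, 9}" "(2 * t^2 - t) mod 11 \<notin> {5, 7, 9}"
proof -
  define q where "q = t div 11"
  define r where "r = t mod 11"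
  have t: "t = 11 * q + r" by (simp add: q_def r_def)
  have r: "0 \<le> r" "r < 11" by (simp_all add: r_def)
  have e1: "3 * t^2 + t = 11 * (33 * q^2 + 6 * q * r + q) + (3 * r^2 + r)"
    unfolding t by (simp add: power2_eq_square algebra_simps)
  have e2: "2 * t^2 - t = 11 * (22 * q^2 + 4 * q * r - q) + (2 * r^2 - r)"
    unfolding t by (simp add: power2_eq_square algebra_simps)
  have c: "r = 0 \<or> r = 1 \<or> r = 2 \<or> r = 3 \<or> r = 4 \<or> r = 5 \<or> r = 6 \<or> r = 7 \<or> r = 8 \<or> r = 9 \<or> r = 10"
    using r by presburger
  have m11: "(11 * s + v) mod 11 = v mod (11::int)" for s v by simp
  have f1: "(3 * t^2 + t) mod 11 = (3 * r^2 + r) mod 11" by (simp only: e1 m11)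
  have f2: "(2 * t^2 - t) mod 11 = (2 * r^2 - r) mod 11" by (simp only: e2 m11)
  show "(3 * t^2 + t) mod 11 \<notin> {5, 7, 9}" unfolding f1 using c by (elim disjE) simp_all
  show "(2 * t^2 - t) mod 11 \<notin> {5, 7, 9}" unfolding f2 using c by (elim disjE) simp_all
qed

lemma eeP_val: "int (2 * ee 3 2 n k) = 3 * (int k - int n)^2 + (int k - int n)"
proof -
  define t where "t = int k - int n"
  have "eet 3 2 t \<ge> \<bar>t\<bar>" by (rule eet_ge_abs) simp_all
  hence "int (ee 3 2 n k) = eet 3 2 t" unfolding ee_def t_def by simp
  moreover have "2 * eet 3 2 t = 3 * t^2 + t"
  proof -
    have "2 * eet 3 2 t = 4 * t + 3 * (2 * trz t)" by (simp add: eet_def algebra_simps)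
    also have "\<dots> = 4 * t + 3 * (t * (t - 1))" by (simp only: trz2)
    also have "\<dots> = 3 * t^2 + t" by (simp add: power2_eq_square algebra_simps)
    finally show ?thesis .
  qed
  ultimately show ?thesis by (simp add: t_def)
qed

lemma eeT_val: "int (ee 4 1 n k) = 2 * (int k - int n)^2 - (int k - int n)"
proof -
  define t where "t = int k - int n"
  have "eet 4 1 t \<ge> \<bar>t\<bar>" by (rule eet_ge_abs) simp_all
  hence "int (ee 4 1 n k) = eet 4 1 t" unfolding ee_def t_def by simp
  moreover have "eet 4 1 t = 2 * t^2 - t"
  proof -
    have "eet 4 1 t = t + 2 * (2 * trz t)" by (simp add: eet_def algebra_simps)
    also have "\<dots> = t + 2 * (t * (t - 1))" by (simp only: trz2)
    also have "\<dots> = 2 * t^2 - t" by (simp add: power2_eq_square algebra_simps)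
    finally show ?thesis .
  qed
  ultimately show ?thesis by (simp add: t_def)
qed

lemma coeff_sum_Xpow_zero:
  assumes "\<And>k. k \<in> A \<Longrightarrow> g k \<noteq> m"
  shows "(\<Sum>k\<in>A. fps_X ^ g k :: bfps) $ m = 0"
proof -
  have "(\<Sum>k\<in>A. fps_X ^ g k :: bfps) $ m = (\<Sum>k\<in>A. (0::bit))"
    unfolding fps_sum_nth by (rule sum.cong) (use assms in auto)
  thus ?thesis by simp
qed

lemma EE_coeffs:
  assumes "m mod 11 \<in> {5, 7, 9}"
  shows "(EE^2 + EE^3) $ m = 0"
proof -
  define n where "n = 2 * m + 2"
  have c1: "cong (Suc m) (EE^2) ((\<Sum>k\<le>2 * n. fps_X ^ ee 3 2 n k)^2)"
    using cong_mult[OF jtpP[of m] jtpP[of m]] by (simp add: power2_eq_square n_def)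
  have "((\<Sum>k\<le>2 * n. fps_X ^ ee 3 2 n k)^2 :: bfps) = (\<Sum>k\<le>2 * n. fps_X ^ (2 * ee 3 2 n k))"
    by (simp add: bfps_sq_sum power_mult[symmetric] mult.commute)
  moreover have "\<dots> $ m = 0"
  proof (rule coeff_sum_Xpow_zero)
    fix k
    have "int m mod 11 = int (m mod 11)" by (simp add: of_nat_mod)
    hence "int m mod 11 \<in> {5, 7, 9}" using assms by auto
    hence "int (2 * ee 3 2 n k) \<noteq> int m" using res11(1)[of "int k - int n"] eeP_val[of n k] by auto
    thus "2 * ee 3 2 n k \<noteq> m" by simp
  qed
  ultimately have a1: "(EE^2) $ m = 0" using c1 by (simp add: cong_def)
  have c2: "cong (Suc m) (EE^3) (\<Sum>k\<le>2 * n. fps_X ^ ee 4 1 n k)"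
    unfolding n_def by (rule jtpT)
  have "(\<Sum>k\<le>2 * n. fps_X ^ ee 4 1 n k :: bfps) $ m = 0"
  proof (rule coeff_sum_Xpow_zero)
    fix k
    have "int m mod 11 = int (m mod 11)" by (simp add: of_nat_mod)
    hence "int m mod 11 \<in> {5, 7, 9}" using assms by auto
    hence "int (ee 4 1 n k) \<noteq> int m" using res11(2)[of "int k - int n"] eeT_val[of n k] by auto
    thus "ee 4 1 n k \<noteq> m" by simp
  qed
  hence a2: "(EE^3) $ m = 0" using c2 by (simp add: cong_def)
  show ?thesis using a1 a2 by simp
qed


definition S' :: "nat \<Rightarrow> nat set" where
  "S' j = {k. 2 \<le> k \<and> (odd k \<or> k \<le> 2 * j \<or> (4 dvd k \<and> 4 * j + 4 \<le> k))}"

lemma S'_decomp: "insert 1 (S' j) = ODD \<union> ((*) 2 ` {1..j} \<union> (*) 2 ` T j)"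
proof (intro equalityI subsetI)
  fix k assume k: "k \<in> insert 1 (S' j)"
  show "k \<in> ODD \<union> ((*) 2 ` {1..j} \<union> (*) 2 ` T j)"
  proof (cases "odd k")
    case True thus ?thesis by (simp add: ODD_def)
  next
    case False
    hence ev: "even k" "k \<noteq> 1" by auto
    hence k2: "2 \<le> k" "k \<le> 2 * j \<or> (4 dvd k \<and> 4 * j + 4 \<le> k)" using k by (auto simp: S'_def)
    show ?thesis
    proof (cases "k \<le> 2 * j")
      case True
      hence "k = 2 * (k div 2)" "k div 2 \<in> {1..j}" using ev k2 by auto
      thus ?thesis by blast
    next
      case False
      hence "4 dvd k" "4 * j + 4 \<le> k" using k2 by auto
      hence "k = 2 * (2 * (k div 4))" "k div 4 \<in> {j<..}" by auto
      thus ?thesis unfolding T_def by blast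
    qed
  qed
next
  fix k assume "k \<in> ODD \<union> ((*) 2 ` {1..j} \<union> (*) 2 ` T j)"
  thus "k \<in> insert 1 (S' j)"
  proof (elim UnE)
    assume "k \<in> ODD"
    hence "odd k" by (simp add: ODD_def)
    thus ?thesis by (cases "k = 1") (auto simp: S'_def elim: oddE)
  next
    assume "k \<in> (*) 2 ` {1..j}" thus ?thesis by (auto simp: S'_def)
  next
    assume "k \<in> (*) 2 ` T j"
    then obtain i where "k = 4 * i" "j < i" unfolding T_def by auto
    thus ?thesis by (auto simp: S'_def)
  qed
qed

lemma term_j: "(1 + fps_X) * D (S' j) = EE * D (T j)"
proof -
  have n1: "1 \<notin> S' j" by (simp add: S'_def)
  have d1: "ODD \<inter> ((*) 2 ` {1..j} \<union> (*) 2 ` T j) = {}" by (auto simp: ODD_def)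
  have d2: "(*) 2 ` {1..j} \<inter> (*) 2 ` T j = {}" by (auto simp: T_def)
  have d3: "(*) 2 ` {1..j} \<inter> T j = {}" by (auto simp: T_def)
  have u: "(*) 2 ` {1..j} \<union> T j = insert 0 (T 0) - {0}"
    by (auto simp: T_def image_iff)
  have d0: "{1} \<inter> S' j = {}" using n1 by auto
  have "(1 + fps_X) * D (S' j) = D ({1} \<union> S' j)"
    by (simp only: D_mult[OF d0] D_one)
  also have "{1} \<union> S' j = ODD \<union> ((*) 2 ` {1..j} \<union> (*) 2 ` T j)"
    using S'_decomp[of j] by simp
  also have "D (ODD \<union> ((*) 2 ` {1..j} \<union> (*) 2 ` T j)) = D ODD * (D ((*) 2 ` {1..j}) * (D (T j))^2)"
    by (simp only: D_mult[OF d1] D_mult[OF d2] D_double[of "T j"])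
  also have "D ((*) 2 ` {1..j}) * D (T j) = D (T 0)"
    using D_mult[OF d3] u by (simp add: D_minus0 D_insert0)
  hence "D ODD * (D ((*) 2 ` {1..j}) * (D (T j))^2) = D ODD * D (T 0) * D (T j)"
    by (simp add: power2_eq_square ac_simps)
  finally show ?thesis by (simp add: EE_split[symmetric])
qed

definition FF :: "nat \<Rightarrow> bfps" where
  "FF m = (\<Sum>j\<in>{1..m}. fps_X ^ (j * j) * (1 + fps_X) * Pd (S' j \<inter> {1..m}))"

lemma FF_cong: "cong (Suc m) (FF m) (EE^2 + EE^3)"
proof -
  have "cong (Suc m) (FF m) (\<Sum>j\<in>{1..m}. fps_X ^ (j * j) * ((1 + fps_X) * D (S' j)))"
    unfolding FF_def
  proof (rule cong_sum)
    fix j show "cong (Suc m) (fps_X ^ (j * j) * (1 + fps_X) * Pd (S' j \<inter> {1..m})) (fps_X ^ (j * j) * ((1 + fps_X) * D (S' j)))"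
      using cong_mult_left[OF cong_sym[OF D_cong_trunc[of m "S' j"]], of "fps_X ^ (j * j) * (1 + fps_X)"]
      by (simp add: mult.assoc)
  qed
  also have "(\<Sum>j\<in>{1..m}. fps_X ^ (j * j) * ((1 + fps_X) * D (S' j))) = EE * (\<Sum>j\<in>{1..m}. fps_X ^ (j * j) * D (T j))"
  proof -
    have "(\<Sum>j\<in>{1..m}. fps_X ^ (j * j) * ((1 + fps_X) * D (S' j))) = (\<Sum>j\<in>{1..m}. fps_X ^ (j * j) * (EE * D (T j)))"
      by (simp only: term_j)
    thus ?thesis by (simp add: sum_distrib_left ac_simps)
  qed
  also have "(\<Sum>j\<in>{1..m}. fps_X ^ (j * j) * D (T j)) = (\<Sum>j\<le>m. fps_X ^ (j * j) * D (T j)) + D (T 0)"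
  proof -
    have "{..m} = insert 0 {1..m}" by auto
    hence "(\<Sum>j\<le>m. fps_X ^ (j * j) * D (T j)) = D (T 0) + (\<Sum>j\<in>{1..m}. fps_X ^ (j * j) * D (T j))"
      by simp
    thus ?thesis by (simp add: ac_simps)
  qed
  finally have c1: "cong (Suc m) (FF m) (EE * ((\<Sum>j\<le>m. fps_X ^ (j * j) * D (T j)) + D (T 0)))" .
  have "cong (Suc m) (EE * ((\<Sum>j\<le>m. fps_X ^ (j * j) * D (T j)) + D (T 0))) (EE * (EE + D (T 0)))"
    using euler_odd[of m] EE_split by (intro cong_mult_left cong_add) (auto intro: cong_sym)
  also have "EE * (EE + D (T 0)) = EE^2 + EE^3" by (simp add: D_T0 power2_eq_square power3_eq_cube algebra_simps)
  finally show ?thesis using c1 cong_trans by blast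
qed


lemma Pd_expand: "finite F \<Longrightarrow> Pd F = (\<Sum>B\<in>Pow F. fps_X ^ (\<Sum>B))"
proof -
  assume f: "finite F"
  have "Pd F = (\<Prod>s\<in>F. fps_X ^ s + 1)" unfolding Pd_def by (simp add: add.commute)
  also have "\<dots> = (\<Sum>B\<in>Pow F. (\<Prod>s\<in>B. fps_X ^ s) * (\<Prod>s\<in>F - B. 1))"
    by (rule prod_add[OF f])
  also have "\<dots> = (\<Sum>B\<in>Pow F. fps_X ^ (\<Sum>B))"
    by (simp add: power_sum)
  finally show ?thesis .
qed

lemma coeff_card:
  assumes "finite A"
  shows "(\<Sum>x\<in>A. fps_X ^ g x :: bfps) $ m = of_nat (card {x\<in>A. g x = m})"
proof -
  have "(\<Sum>x\<in>A. fps_X ^ g x :: bfps) $ m = (\<Sum>x\<in>A. if g x = m then 1 else 0)"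
    unfolding fps_sum_nth by (rule sum.cong) auto
  also have "\<dots> = (\<Sum>x\<in>{x\<in>A. g x = m}. 1)"
    by (rule sum.inter_filter[OF assms, symmetric])
  also have "\<dots> = of_nat (card {x\<in>A. g x = m})" by simp
  finally show ?thesis .
qed

definition Idx :: "nat \<Rightarrow> (nat \<times> nat \<times> nat set) set" where
  "Idx m = Sigma {1..m} (\<lambda>j. Sigma {0..1} (\<lambda>e. Pow (S' j \<inter> {1..m})))"

definition wt :: "nat \<times> nat \<times> nat set \<Rightarrow> nat" where
  "wt x = (case x of (j, e, B) \<Rightarrow> j * j + e + \<Sum>B)"

lemma finite_Idx: "finite (Idx m)"
  unfolding Idx_def by (intro finite_SigmaI) auto

lemma FF_sum: "FF m = (\<Sum>x\<in>Idx m. fps_X ^ wt x)"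
proof -
  have t: "fps_X ^ (j * j) * (1 + fps_X) * Pd (S' j \<inter> {1..m})
      = (\<Sum>e\<in>{0..1}. \<Sum>B\<in>Pow (S' j \<inter> {1..m}). fps_X ^ (j * j + e + \<Sum>B))" for j
  proof -
    have "fps_X ^ (j * j) * (1 + fps_X) * Pd (S' j \<inter> {1..m})
        = (\<Sum>B\<in>Pow (S' j \<inter> {1..m}). fps_X ^ (j * j + 0 + \<Sum>B)) + (\<Sum>B\<in>Pow (S' j \<inter> {1..m}). fps_X ^ (j * j + 1 + \<Sum>B))"
      by (simp add: Pd_expand sum_distrib_left power_add algebra_simps sum.distrib)
    also have "\<dots> = (\<Sum>e\<in>{0..1}. \<Sum>B\<in>Pow (S' j \<inter> {1..m}). fps_X ^ (j * j + e + \<Sum>B))"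
      by (simp add: numeral_2_eq_2)
    finally show ?thesis .
  qed
  have "FF m = (\<Sum>j\<in>{1..m}. \<Sum>e\<in>{0..1}. \<Sum>B\<in>Pow (S' j \<inter> {1..m}). fps_X ^ (j * j + e + \<Sum>B))"
    unfolding FF_def by (simp only: t)
  also have "\<dots> = (\<Sum>x\<in>Idx m. fps_X ^ wt x)"
    unfolding Idx_def wt_def sum.cartesian_product
    by (subst sum.Sigma) (auto simp: split_def)
  finally show ?thesis .
qed

lemma sq_unique:
  assumes "1 \<le> j" "1 \<le> j'" "e \<le> 1" "e' \<le> 1" "j * j + e = j' * j' + (e'::nat)"
  shows "j = j'"
proof (rule ccontr)
  assume "j \<noteq> j'"
  hence "j < j' \<or> j' < j" by arith
  thus False
  proof
    assume "j < j'"
    hence "Suc j * Suc j \<le> j' * j'" by (intro mult_le_mono) auto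
    thus False using assms by simp
  next
    assume "j' < j"
    hence "Suc j' * Suc j' \<le> j * j" by (intro mult_le_mono) auto
    thus False using assms by simp
  qed
qed

definition phi :: "nat \<times> nat \<times> nat set \<Rightarrow> nat multiset" where
  "phi x = (case x of (j, e, B) \<Rightarrow> replicate_mset (j * j + e) 1 + mset_set B)"

lemma S'_ge2: "x \<in> S' j \<Longrightarrow> 2 \<le> x" by (simp add: S'_def)

lemma phi_count:
  assumes "B \<subseteq> S' j \<inter> {1..m}"
  shows "count (phi (j, e, B)) x = (if x = 1 then j * j + e else if x \<in> B then 1 else 0)"
proof -
  have "finite B" using assms finite_subset by blast
  moreover have "1 \<notin> B" using assms S'_ge2 by force
  ultimately show ?thesis unfolding phi_def by (auto simp: count_mset_set')
qed

lemma sum_mset_mset_set: "sum_mset (mset_set (B::nat set)) = \<Sum>B"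
  by (induction B rule: infinite_finite_induct) simp_all

lemma phi_sum:
  assumes "B \<subseteq> S' j \<inter> {1..m}"
  shows "sum_mset (phi (j, e, B)) = j * j + e + \<Sum>B"
  unfolding phi_def by (simp add: sum_mset_mset_set)

lemma mem_le_sum_mset: "x \<in># (p::nat multiset) \<Longrightarrow> x \<le> sum_mset p"
  by (metis le_add1 multi_member_split sum_mset.add_mset)

lemma c3_card: "c3 m = card {x \<in> Idx m. wt x = m}"
proof -
  define I where "I = {x \<in> Idx m. wt x = m}"
  define Pp where "Pp = {p. is_partition p m \<and> c3_cond p}"
  have inj: "inj_on phi I"
  proof (rule inj_onI)
    fix x y assume xI: "x \<in> I" and yI: "y \<in> I" and eq: "phi x = phi y"
    obtain j e B where x: "x = (j, e, B)" by (cases x) auto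
    obtain j' e' B' where y: "y = (j', e', B')" by (cases y) auto
    have hx: "j \<in> {1..m}" "e \<le> 1" "B \<subseteq> S' j \<inter> {1..m}" using xI x by (auto simp: I_def Idx_def)
    have hy: "j' \<in> {1..m}" "e' \<le> 1" "B' \<subseteq> S' j' \<inter> {1..m}" using yI y by (auto simp: I_def Idx_def)
    have c: "count (phi x) z = count (phi y) z" for z using eq by simp
    have c1: "count (phi x) 1 = j * j + e" unfolding x using phi_count[OF hx(3), of e 1] by (simp only: simp_thms if_True)
    have c2: "count (phi y) 1 = j' * j' + e'" unfolding y using phi_count[OF hy(3), of e' 1] by (simp only: simp_thms if_True)
    have eqj: "j * j + e = j' * j' + e'" using c[of 1] c1 c2 by (simp only:)
    have "j = j'" by (rule sq_unique[OF _ _ _ _ eqj]) (use hx hy in auto)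
    have "e = e'" using eqj \<open>j = j'\<close> by simp
    moreover have "B = B'"
    proof (intro set_eqI)
      fix z
      show "z \<in> B \<longleftrightarrow> z \<in> B'"
      proof (cases "z = 1")
        case True thus ?thesis using hx(3) hy(3) S'_ge2 by force
      next
        case False
        have fx: "count (phi x) z = (if z \<in> B then 1 else 0)" unfolding x using phi_count[OF hx(3), of e z] False by (simp only: if_False)
        have fy: "count (phi y) z = (if z \<in> B' then 1 else 0)" unfolding y using phi_count[OF hy(3), of e' z] False by (simp only: if_False)
        have "(if z \<in> B then 1 else 0) = (if z \<in> B' then 1 else (0::nat))" using c[of z] fx fy by (simp only:)
        thus ?thesis by (cases "z \<in> B"; cases "z \<in> B'") simp_all
      qed
    qed
    ultimately show "x = y" using x y \<open>j = j'\<close> by simp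
  qed
  have img: "phi ` I = Pp"
  proof (intro equalityI subsetI)
    fix p assume "p \<in> phi ` I"
    then obtain j e B where xI: "(j, e, B) \<in> I" and p: "p = phi (j, e, B)" by auto
    have h: "j \<in> {1..m}" "e \<le> 1" "B \<subseteq> S' j \<inter> {1..m}" "j * j + e + \<Sum>B = m"
      using xI by (auto simp: I_def Idx_def wt_def)
    have cnt: "count p x = (if x = 1 then j * j + e else if x \<in> B then 1 else 0)" for x
      unfolding p by (rule phi_count[OF h(3)])
    have "is_partition p m"
    proof -
      have "0 < x" if "x \<in># p" for x
      proof -
        have "count p x > 0" using that by simp
        hence "x = 1 \<or> x \<in> B" using cnt[of x] by (auto split: if_splits)
        thus ?thesis using h(3) S'_ge2 by force
      qed
      moreover have "sum_mset p = m" unfolding p using phi_sum[OF h(3)] h(4) by simp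
      ultimately show ?thesis by (simp add: is_partition_def)
    qed
    moreover have "c3_cond p"
      unfolding c3_cond_def
    proof (intro exI[of _ j] conjI allI impI ballI)
      show "1 \<le> j" using h(1) by simp
      show "count p 1 = j^2 \<or> count p 1 = j^2 + 1" using cnt[of 1] h(2) by (auto simp: power2_eq_square)
      show "count p k \<le> 1" if "odd k \<and> 1 < k" for k using cnt[of k] that by auto
      show "count p k \<le> 1" if "even k" for k using cnt[of k] that by auto
      fix k assume k: "k \<in># p" "even k"
      hence "count p k > 0" by simp
      hence "k \<in> B" using cnt[of k] k(2) by (auto split: if_splits)
      hence "k \<in> S' j" using h(3) by auto
      thus "k \<le> 2 * j \<or> (4 dvd k \<and> 4 * j + 4 \<le> k)" using k(2) by (auto simp: S'_def)
    qed
    ultimately show "p \<in> Pp" by (simp add: Pp_def)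
  next
    fix p assume "p \<in> Pp"
    hence part: "is_partition p m" and cc: "c3_cond p" by (auto simp: Pp_def)
    obtain j where j: "j \<ge> 1" "count p 1 = j^2 \<or> count p 1 = j^2 + 1"
      "\<forall>k. odd k \<and> k > 1 \<longrightarrow> count p k \<le> 1" "\<forall>k. even k \<longrightarrow> count p k \<le> 1"
      "\<forall>k\<in>#p. even k \<longrightarrow> (k \<le> 2*j \<or> (4 dvd k \<and> k \<ge> 4*j + 4))"
      using cc unfolding c3_cond_def by blast
    define e where "e = count p 1 - j * j"
    define B where "B = set_mset p - {1}"
    have e: "e \<le> 1" "count p 1 = j * j + e" using j(2) by (auto simp: e_def power2_eq_square)
    have pos: "0 < x" if "x \<in># p" for x using part that by (simp add: is_partition_def)
    have sm: "sum_mset p = m" using part by (simp add: is_partition_def)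
    have B: "B \<subseteq> S' j \<inter> {1..m}"
    proof
      fix x assume "x \<in> B"
      hence x: "x \<in># p" "x \<noteq> 1" by (auto simp: B_def)
      have "2 \<le> x" using pos[OF x(1)] x(2) by simp
      moreover have "x \<le> m" using mem_le_sum_mset[OF x(1)] sm by simp
      moreover have "odd x \<or> x \<le> 2 * j \<or> (4 dvd x \<and> 4 * j + 4 \<le> x)" using j(5) x(1) by auto
      ultimately show "x \<in> S' j \<inter> {1..m}" by (simp add: S'_def)
    qed
    have peq: "p = phi (j, e, B)"
    proof (rule multiset_eqI)
      fix x
      show "count p x = count (phi (j, e, B)) x"
      proof (cases "x = 1")
        case True thus ?thesis using phi_count[OF B] e by simp
      next
        case False
        have le1: "count p x \<le> 1"
        proof (cases "even x")
          case True thus ?thesis using j(4) by simp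
        next
          case False
          hence "x > 1" using \<open>x \<noteq> 1\<close> by (cases x) auto
          thus ?thesis using j(3) False by simp
        qed
        have xb: "x \<in> B \<longleftrightarrow> count p x > 0" using False by (simp add: B_def)
        have "count p x = (if x \<in> B then 1 else 0)"
        proof (cases "x \<in> B")
          case True
          hence "count p x > 0" using xb by blast
          hence "count p x = 1" using le1 by linarith
          thus ?thesis using True by simp
        next
          case False
          hence "\<not> count p x > 0" using xb by blast
          hence "count p x = 0" by linarith
          thus ?thesis using False by simp
        qed
        thus ?thesis using phi_count[OF B, of e x] False by simp
      qed
    qed
    have w: "j * j + e + \<Sum>B = m" using phi_sum[OF B, of e] peq sm by simp
    have "j \<le> j * j" by simp
    hence "j \<le> m" using w by linarith
    hence "(j, e, B) \<in> I" using j(1) e(1) B w by (auto simp: I_def Idx_def wt_def)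
    thus "p \<in> phi ` I" using peq by blast
  qed
  have "bij_betw phi I Pp" using inj img by (rule bij_betw_imageI)
  hence "card I = card Pp" by (rule bij_betw_same_card)
  thus ?thesis by (simp add: c3_def I_def Pp_def)
qed

lemma FF_nth: "FF m $ m = of_nat (c3 m)"
  unfolding FF_sum c3_card by (rule coeff_card[OF finite_Idx])

lemma of_nat_bit: "(of_nat n :: bit) = (if even n then 0 else 1)"
  by (induction n) auto

lemma even_c3: "m mod 11 \<in> {5, 7, 9} \<Longrightarrow> even (c3 m)"
proof -
  assume a: "m mod 11 \<in> {5, 7, 9}"
  have "(of_nat (c3 m) :: bit) = (EE^2 + EE^3) $ m"
    using FF_nth[of m] cong_nth[OF FF_cong[of m], of m] by simp
  also have "\<dots> = 0" by (rule EE_coeffs[OF a])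
  finally show ?thesis by (simp add: of_nat_bit split: if_splits)
qed

theorem theorem4:
  fixes n :: nat
  shows "even (c3 (11*n+5)) \<and> even (c3 (11*n+7)) \<and> even (c3 (11*n+9))"
  by (intro conjI even_c3) simp_all


end
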